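(* For every positive integer $n$, $L(n+1) \ge L(n)$.
   Context: Given a finite multiset of $n$ rectangles (tiles), a rectangular layout is a tiling of a rectangle by all $n$ tiles (axis-parallel, no holes, no overlaps). Two layouts are counted as different if the resulting big rectangles have different perimeters. $L(n)$ denotes the maximum, over all choices of $n$ rectangular tiles, of the number of different rectangular layouts that can be formed using all the tiles. *)

theory Defs
  imports Main "HOL-Library.Extended_Nat"
begin

text \<open>A tile is a pair (width, height) of positive reals; a multiset of n tiles
is represented by a list of length n (order irrelevant).\<close>

type_synonym tile = "real \<times> real"

definition closed_rect :: "real \<Rightarrow> real \<Rightarrow> real \<Rightarrow> real \<Rightarrow> (real \<times> real) set" where
  "closed_rect a b w h = {(x, y). a \<le> x \<and> x \<le> a + w \<and> b \<le> y \<and> y \<le> b + h}"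

definition open_rect :: "real \<Rightarrow> real \<Rightarrow> real \<Rightarrow> real \<Rightarrow> (real \<times> real) set" where
  "open_rect a b w h = {(x, y). a < x \<and> x < a + w \<and> b < y \<and> y < b + h}"

definition placed_w :: "tile \<Rightarrow> bool \<Rightarrow> real" where
  "placed_w t r = (if r then snd t else fst t)"

definition placed_h :: "tile \<Rightarrow> bool \<Rightarrow> real" where
  "placed_h t r = (if r then fst t else snd t)"

definition is_layout :: "tile list \<Rightarrow> real \<Rightarrow> real \<Rightarrow> (nat \<Rightarrow> real \<times> real) \<Rightarrow> (nat \<Rightarrow> bool) \<Rightarrow> bool" where
  "is_layout ts W H pos rot \<longleftrightarrow>
     W > 0 \<and> H > 0 \<and>
     (\<Union>i<length ts. closed_rect (fst (pos i)) (snd (pos i))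
                      (placed_w (ts ! i) (rot i)) (placed_h (ts ! i) (rot i)))
       = closed_rect 0 0 W H \<and>
     (\<forall>i<length ts. \<forall>j<length ts. i \<noteq> j \<longrightarrow>
        open_rect (fst (pos i)) (snd (pos i)) (placed_w (ts ! i) (rot i)) (placed_h (ts ! i) (rot i))
        \<inter> open_rect (fst (pos j)) (snd (pos j)) (placed_w (ts ! j) (rot j)) (placed_h (ts ! j) (rot j))
        = {})"

definition layout_perimeters :: "tile list \<Rightarrow> real set" where
  "layout_perimeters ts = {2 * (W + H) | W H. \<exists>pos rot. is_layout ts W H pos rot}"

definition valid_tiles :: "tile list \<Rightarrow> bool" where
  "valid_tiles ts \<longleftrightarrow> (\<forall>t\<in>set ts. fst t > 0 \<and> snd t > 0)"

text \<open>L(n): maximum over all multisets of n tiles of the number of distinct layouts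
(layouts counted by perimeter).\<close>
definition L :: "nat \<Rightarrow> enat" where
  "L n = (SUP ts \<in> {ts. length ts = n \<and> valid_tiles ts}. enat (card (layout_perimeters ts)))"

end

theory Submission
  imports Defs "HOL-Library.FuncSet"
begin

lemma intervals_sum:
  fixes a w :: "'i \<Rightarrow> real"
  shows "finite I \<Longrightarrow> I \<noteq> {} \<Longrightarrow> (\<forall>i\<in>I. w i > 0) \<Longrightarrow>
    (\<forall>i\<in>I. \<forall>j\<in>I. i \<noteq> j \<longrightarrow> {a i<..<a i + w i} \<inter> {a j<..<a j + w j} = {}) \<Longrightarrow>
    (\<Union>i\<in>I. {a i..a i + w i}) = {0..c} \<Longrightarrow> sum w I = c"
proof (induction "card I" arbitrary: I c rule: less_induct)
  case less
  note fin = less.prems(1) and ne = less.prems(2) and wpos = less.prems(3)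
    and disj = less.prems(4) and U = less.prems(5)
  define e where "e = (\<lambda>i. a i + w i)"
  have "Max (e ` I) \<in> e ` I" using fin ne by simp
  then obtain m where m: "m \<in> I" "e m = Max (e ` I)" by auto
  have mmax: "\<forall>i\<in>I. e i \<le> e m" using m fin by auto
  have inU: "x \<in> {0..c}" if "i \<in> I" "a i \<le> x" "x \<le> a i + w i" for x i
  proof -
    from that have "x \<in> (\<Union>i\<in>I. {a i..a i + w i})" by auto
    then show ?thesis by (simp only: U)
  qed
  have am0: "0 \<le> a m" using inU[of m "a m"] m wpos by force
  have emc: "e m \<le> c" using inU[of m "e m"] m wpos unfolding e_def by force
  have c0: "0 \<le> c" using am0 emc wpos m unfolding e_def by force
  have "c \<in> (\<Union>i\<in>I. {a i..a i + w i})" using U c0 by auto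
  then obtain i where "i \<in> I" "c \<le> e i" unfolding e_def by auto
  with mmax have cm: "e m = c" using emc by force
  show ?case
  proof (cases "I - {m} = {}")
    case True
    then have I: "I = {m}" using m by auto
    have "0 \<in> (\<Union>i\<in>I. {a i..a i + w i})" using U c0 by auto
    then have "a m = 0" using I am0 by auto
    then show ?thesis using I cm unfolding e_def by simp
  next
    case False
    define J where "J = I - {m}"
    have Jsub: "\<forall>j\<in>J. a j + w j \<le> a m"
    proof
      fix j assume j: "j \<in> J"
      show "a j + w j \<le> a m"
      proof (rule ccontr)
        assume nle: "\<not> a j + w j \<le> a m"
        define p where "p = (max (a j) (a m) + (a j + w j)) / 2"
        have "e j \<le> c" using mmax j cm unfolding J_def by auto
        then have "p \<in> {a j<..<a j + w j} \<inter> {a m<..<a m + w m}"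
          using nle wpos j m cm unfolding p_def J_def e_def by (auto simp: max_def)
        then show False using disj j m unfolding J_def by blast
      qed
    qed
    have aj0: "\<forall>j\<in>J. 0 \<le> a j" using inU wpos unfolding J_def by force
    have am_pos: "0 < a m"
    proof -
      obtain j where "j \<in> J" using False J_def by auto
      then show ?thesis using Jsub aj0 wpos unfolding J_def by force
    qed
    have finJ: "finite J" using fin J_def by auto
    have "Max (e ` J) \<in> e ` J" using finJ False J_def by simp
    then obtain k where k: "k \<in> J" "e k = Max (e ` J)" by auto
    have kmax: "\<forall>j\<in>J. e j \<le> e k" using k finJ by auto
    have ekm: "e k = a m"
    proof (rule ccontr)
      assume ne': "e k \<noteq> a m"
      have lt: "e k < a m" using Jsub k ne' unfolding e_def by force
      define p where "p = (e k + a m) / 2"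
      have p0: "0 \<le> p" using aj0 wpos k lt unfolding p_def e_def J_def by force
      have "p \<in> {0..c}" using p0 lt cm wpos m unfolding p_def e_def by auto
      then have "p \<in> (\<Union>i\<in>I. {a i..a i + w i})" by (simp only: U)
      then obtain i where i: "i \<in> I" "a i \<le> p" "p \<le> a i + w i" by auto
      show False
      proof (cases "i = m")
        case True then show ?thesis using i lt unfolding p_def by auto
      next
        case False
        then have "i \<in> J" using i J_def by auto
        then show ?thesis using kmax i lt unfolding p_def e_def by force
      qed
    qed
    have UJ: "(\<Union>i\<in>J. {a i..a i + w i}) = {0..a m}"
    proof
      show "(\<Union>i\<in>J. {a i..a i + w i}) \<subseteq> {0..a m}"
        using Jsub aj0 by force
    next
      show "{0..a m} \<subseteq> (\<Union>i\<in>J. {a i..a i + w i})"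
      proof
        fix x assume x: "x \<in> {0..a m}"
        show "x \<in> (\<Union>i\<in>J. {a i..a i + w i})"
        proof (cases "x = a m")
          case True
          then show ?thesis using k ekm wpos unfolding e_def J_def by force
        next
          case False
          then have "x \<in> {0..c}" using x cm wpos m unfolding e_def by auto
          then have "x \<in> (\<Union>i\<in>I. {a i..a i + w i})" by (simp only: U)
          then obtain i where i: "i \<in> I" "a i \<le> x" "x \<le> a i + w i" by auto
          have "i \<noteq> m" using i x False by auto
          then show ?thesis using i J_def by auto
        qed
      qed
    qed
    have cardJ: "card J < card I" unfolding J_def by (rule card_Diff1_less[OF fin m(1)])
    have "sum w J = a m"
      using less.hyps[OF cardJ, of "a m"] finJ False wpos disj UJ unfolding J_def by auto
    moreover have "sum w I = w m + sum w J"
      using m fin J_def by (simp add: sum.remove)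
    ultimately show ?thesis using cm unfolding e_def by simp
  qed
qed

definition Fs :: "tile list \<Rightarrow> real set" where
  "Fs ts = {sum f I | f I. I \<subseteq> {..<length ts} \<and> (\<forall>i\<in>I. f i = fst (ts!i) \<or> f i = snd (ts!i))}"

lemma Fs_finite: "finite (Fs ts)"
proof -
  let ?n = "length ts"
  let ?P = "PiE {..<?n} (\<lambda>i. {fst (ts!i), snd (ts!i)})"
  have "Fs ts \<subseteq> (\<lambda>(I, g). sum g I) ` (Pow {..<?n} \<times> ?P)"
  proof
    fix x assume "x \<in> Fs ts"
    then obtain f I where fI: "x = sum f I" "I \<subseteq> {..<?n}"
      "\<forall>i\<in>I. f i = fst (ts!i) \<or> f i = snd (ts!i)" unfolding Fs_def by auto
    define g where "g = (\<lambda>i. if i < ?n then (if i \<in> I then f i else fst (ts!i)) else undefined)"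
    have "g \<in> ?P" using fI unfolding g_def by (auto simp: PiE_def extensional_def)
    moreover have "sum g I = x" using fI unfolding g_def by (auto intro!: sum.cong)
    ultimately show "x \<in> (\<lambda>(I, g). sum g I) ` (Pow {..<?n} \<times> ?P)"
      using fI by (auto intro!: image_eqI[where x="(I, g)"])
  qed
  moreover have "finite (Pow {..<?n} \<times> ?P)" by (auto intro!: finite_PiE)
  ultimately show ?thesis using finite_subset by blast
qed

lemma pw_pos: "valid_tiles ts \<Longrightarrow> i < length ts \<Longrightarrow> placed_w (ts!i) r > 0 \<and> placed_h (ts!i) r > 0"
  unfolding valid_tiles_def placed_w_def placed_h_def using nth_mem by fastforce

lemma pw_F: "placed_w t r = fst t \<or> placed_w t r = snd t" "placed_h t r = fst t \<or> placed_h t r = snd t"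
  unfolding placed_w_def placed_h_def by auto

lemma width_in_F:
  assumes L: "is_layout ts W H pos rot" and v: "valid_tiles ts"
  shows "W \<in> Fs ts"
proof -
  let ?n = "length ts"
  define a where "a i = fst (pos i)" for i
  define b where "b i = snd (pos i)" for i
  define w where "w i = placed_w (ts!i) (rot i)" for i
  define h where "h i = placed_h (ts!i) (rot i)" for i
  define I where "I = {i. i < ?n \<and> b i = 0}"
  have wh: "\<And>i. i < ?n \<Longrightarrow> w i > 0 \<and> h i > 0" using pw_pos[OF v] unfolding w_def h_def by auto
  have U: "(\<Union>i<?n. closed_rect (a i) (b i) (w i) (h i)) = closed_rect 0 0 W H"
    and D: "\<And>i j. i < ?n \<Longrightarrow> j < ?n \<Longrightarrow> i \<noteq> j \<Longrightarrow>
      open_rect (a i) (b i) (w i) (h i) \<inter> open_rect (a j) (b j) (w j) (h j) = {}"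
    and W0: "W > 0" and H0: "H > 0"
    using L unfolding is_layout_def a_def b_def w_def h_def by auto
  have sub: "(x,y) \<in> closed_rect 0 0 W H" if "i < ?n" "(x, y) \<in> closed_rect (a i) (b i) (w i) (h i)" for i x y
  proof -
    from that have "(x, y) \<in> (\<Union>i<?n. closed_rect (a i) (b i) (w i) (h i))" by blast
    then show ?thesis by (simp only: U)
  qed
  have b0: "\<And>i. i < ?n \<Longrightarrow> 0 \<le> b i"
  proof -
    fix i assume i: "i < ?n"
    have "(a i, b i) \<in> closed_rect (a i) (b i) (w i) (h i)" using wh[OF i] unfolding closed_rect_def by auto
    from sub[OF i this] show "0 \<le> b i" unfolding closed_rect_def by auto
  qed
  have "sum w I = W"
  proof (rule intervals_sum)
    show "finite I" unfolding I_def by auto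
    have "(0, 0) \<in> closed_rect 0 0 W H" using W0 H0 unfolding closed_rect_def by auto
    then have "(0,0) \<in> (\<Union>i<?n. closed_rect (a i) (b i) (w i) (h i))" by (simp only: U)
    then obtain i where i: "i < ?n" "(0,0) \<in> closed_rect (a i) (b i) (w i) (h i)" by blast
    then have "b i = 0" using b0[OF i(1)] unfolding closed_rect_def by auto
    then show "I \<noteq> {}" using i unfolding I_def by auto
    show "\<forall>i\<in>I. w i > 0" using wh unfolding I_def by auto
    show "\<forall>i\<in>I. \<forall>j\<in>I. i \<noteq> j \<longrightarrow> {a i<..<a i + w i} \<inter> {a j<..<a j + w j} = {}"
    proof (intro ballI impI)
      fix i j assume ij: "i \<in> I" "j \<in> I" "i \<noteq> j"
      show "{a i<..<a i + w i} \<inter> {a j<..<a j + w j} = {}"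
      proof (rule ccontr)
        assume "\<not> ?thesis"
        then obtain x where x: "x \<in> {a i<..<a i + w i}" "x \<in> {a j<..<a j + w j}" by blast
        define y where "y = min (h i) (h j) / 2"
        have "(x, y) \<in> open_rect (a i) (b i) (w i) (h i) \<inter> open_rect (a j) (b j) (w j) (h j)"
          using x ij wh[of i] wh[of j] unfolding open_rect_def I_def y_def by (auto simp: min_def)
        then show False using D ij unfolding I_def by blast
      qed
    qed
    show "(\<Union>i\<in>I. {a i..a i + w i}) = {0..W}"
    proof
      show "(\<Union>i\<in>I. {a i..a i + w i}) \<subseteq> {0..W}"
      proof
        fix x assume "x \<in> (\<Union>i\<in>I. {a i..a i + w i})"
        then obtain i where i: "i \<in> I" "a i \<le> x" "x \<le> a i + w i" by auto
        have "(x, 0) \<in> closed_rect (a i) (b i) (w i) (h i)" using i wh[of i] unfolding closed_rect_def I_def by auto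
        moreover have "i < ?n" using i(1) unfolding I_def by auto
        ultimately have "(x, 0) \<in> closed_rect 0 0 W H" using sub by blast
        then show "x \<in> {0..W}" unfolding closed_rect_def by auto
      qed
    next
      show "{0..W} \<subseteq> (\<Union>i\<in>I. {a i..a i + w i})"
      proof
        fix x assume "x \<in> {0..W}"
        then have "(x, 0) \<in> closed_rect 0 0 W H" using H0 unfolding closed_rect_def by auto
        then have "(x, 0) \<in> (\<Union>i<?n. closed_rect (a i) (b i) (w i) (h i))" by (simp only: U)
        then obtain i where i: "i < ?n" "(x, 0) \<in> closed_rect (a i) (b i) (w i) (h i)" by blast
        then have "b i = 0" using b0[OF i(1)] unfolding closed_rect_def by auto
        then show "x \<in> (\<Union>i\<in>I. {a i..a i + w i})" using i unfolding I_def closed_rect_def by auto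
      qed
    qed
  qed
  moreover have "I \<subseteq> {..<?n}" unfolding I_def by auto
  moreover have "\<forall>i\<in>I. w i = fst (ts!i) \<or> w i = snd (ts!i)" using pw_F(1) unfolding w_def by blast
  ultimately show ?thesis unfolding Fs_def mem_Collect_eq by blast
qed

lemma height_in_F:
  assumes L: "is_layout ts W H pos rot" and v: "valid_tiles ts"
  shows "H \<in> Fs ts"
proof -
  let ?n = "length ts"
  define a where "a i = snd (pos i)" for i
  define b where "b i = fst (pos i)" for i
  define w where "w i = placed_h (ts!i) (rot i)" for i
  define h where "h i = placed_w (ts!i) (rot i)" for i
  define I where "I = {i. i < ?n \<and> b i = 0}"
  have wh: "\<And>i. i < ?n \<Longrightarrow> w i > 0 \<and> h i > 0" using pw_pos[OF v] unfolding w_def h_def by auto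
  have U: "(\<Union>i<?n. closed_rect (b i) (a i) (h i) (w i)) = closed_rect 0 0 W H"
    and D: "\<And>i j. i < ?n \<Longrightarrow> j < ?n \<Longrightarrow> i \<noteq> j \<Longrightarrow>
      open_rect (b i) (a i) (h i) (w i) \<inter> open_rect (b j) (a j) (h j) (w j) = {}"
    and W0: "W > 0" and H0: "H > 0"
    using L unfolding is_layout_def a_def b_def w_def h_def by auto
  have sub: "(x,y) \<in> closed_rect 0 0 W H" if "i < ?n" "(x, y) \<in> closed_rect (b i) (a i) (h i) (w i)" for i x y
  proof -
    from that have "(x, y) \<in> (\<Union>i<?n. closed_rect (b i) (a i) (h i) (w i))" by blast
    then show ?thesis by (simp only: U)
  qed
  have b0: "\<And>i. i < ?n \<Longrightarrow> 0 \<le> b i"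
  proof -
    fix i assume i: "i < ?n"
    have "(b i, a i) \<in> closed_rect (b i) (a i) (h i) (w i)" using wh[OF i] unfolding closed_rect_def by auto
    from sub[OF i this] show "0 \<le> b i" unfolding closed_rect_def by auto
  qed
  have "sum w I = H"
  proof (rule intervals_sum)
    show "finite I" unfolding I_def by auto
    have "(0, 0) \<in> closed_rect 0 0 W H" using W0 H0 unfolding closed_rect_def by auto
    then have "(0,0) \<in> (\<Union>i<?n. closed_rect (b i) (a i) (h i) (w i))" by (simp only: U)
    then obtain i where i: "i < ?n" "(0,0) \<in> closed_rect (b i) (a i) (h i) (w i)" by blast
    then have "b i = 0" using b0[OF i(1)] unfolding closed_rect_def by auto
    then show "I \<noteq> {}" using i unfolding I_def by auto
    show "\<forall>i\<in>I. w i > 0" using wh unfolding I_def by auto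
    show "\<forall>i\<in>I. \<forall>j\<in>I. i \<noteq> j \<longrightarrow> {a i<..<a i + w i} \<inter> {a j<..<a j + w j} = {}"
    proof (intro ballI impI)
      fix i j assume ij: "i \<in> I" "j \<in> I" "i \<noteq> j"
      show "{a i<..<a i + w i} \<inter> {a j<..<a j + w j} = {}"
      proof (rule ccontr)
        assume "\<not> ?thesis"
        then obtain x where x: "x \<in> {a i<..<a i + w i}" "x \<in> {a j<..<a j + w j}" by blast
        define y where "y = min (h i) (h j) / 2"
        have "(y, x) \<in> open_rect (b i) (a i) (h i) (w i) \<inter> open_rect (b j) (a j) (h j) (w j)"
          using x ij wh[of i] wh[of j] unfolding open_rect_def I_def y_def by (auto simp: min_def)
        then show False using D ij unfolding I_def by blast
      qed
    qed
    show "(\<Union>i\<in>I. {a i..a i + w i}) = {0..H}"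
    proof
      show "(\<Union>i\<in>I. {a i..a i + w i}) \<subseteq> {0..H}"
      proof
        fix x assume "x \<in> (\<Union>i\<in>I. {a i..a i + w i})"
        then obtain i where i: "i \<in> I" "a i \<le> x" "x \<le> a i + w i" by auto
        have "(0, x) \<in> closed_rect (b i) (a i) (h i) (w i)" using i wh[of i] unfolding closed_rect_def I_def by auto
        moreover have "i < ?n" using i(1) unfolding I_def by auto
        ultimately have "(0, x) \<in> closed_rect 0 0 W H" using sub by blast
        then show "x \<in> {0..H}" unfolding closed_rect_def by auto
      qed
    next
      show "{0..H} \<subseteq> (\<Union>i\<in>I. {a i..a i + w i})"
      proof
        fix x assume "x \<in> {0..H}"
        then have "(0, x) \<in> closed_rect 0 0 W H" using W0 unfolding closed_rect_def by auto
        then have "(0, x) \<in> (\<Union>i<?n. closed_rect (b i) (a i) (h i) (w i))" by (simp only: U)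
        then obtain i where i: "i < ?n" "(0, x) \<in> closed_rect (b i) (a i) (h i) (w i)" by blast
        then have "b i = 0" using b0[OF i(1)] unfolding closed_rect_def by auto
        then show "x \<in> (\<Union>i\<in>I. {a i..a i + w i})" using i unfolding I_def closed_rect_def by auto
      qed
    qed
  qed
  moreover have "I \<subseteq> {..<?n}" unfolding I_def by auto
  moreover have "\<forall>i\<in>I. w i = fst (ts!i) \<or> w i = snd (ts!i)" using pw_F(2) unfolding w_def by blast
  ultimately show ?thesis unfolding Fs_def mem_Collect_eq by blast
qed

lemma perims_finite:
  assumes v: "valid_tiles ts"
  shows "finite (layout_perimeters ts)"
proof -
  have "layout_perimeters ts \<subseteq> (\<lambda>(W, H). 2 * (W + H)) ` (Fs ts \<times> Fs ts)"
  proof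
    fix p assume "p \<in> layout_perimeters ts"
    then obtain W H pos rot where p: "p = 2 * (W + H)" "is_layout ts W H pos rot"
      unfolding layout_perimeters_def by blast
    have "W \<in> Fs ts" "H \<in> Fs ts" using width_in_F[OF p(2) v] height_in_F[OF p(2) v] by auto
    then show "p \<in> (\<lambda>(W, H). 2 * (W + H)) ` (Fs ts \<times> Fs ts)"
      using p(1) by (auto intro!: image_eqI[where x="(W, H)"])
  qed
  moreover have "finite (Fs ts \<times> Fs ts)" using Fs_finite by auto
  ultimately show ?thesis using finite_subset by blast
qed

definition CR :: "tile list \<Rightarrow> (nat \<Rightarrow> real \<times> real) \<Rightarrow> (nat \<Rightarrow> bool) \<Rightarrow> nat \<Rightarrow> (real \<times> real) set" where
  "CR ts pos rot i = closed_rect (fst (pos i)) (snd (pos i)) (placed_w (ts ! i) (rot i)) (placed_h (ts ! i) (rot i))"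

definition OR :: "tile list \<Rightarrow> (nat \<Rightarrow> real \<times> real) \<Rightarrow> (nat \<Rightarrow> bool) \<Rightarrow> nat \<Rightarrow> (real \<times> real) set" where
  "OR ts pos rot i = open_rect (fst (pos i)) (snd (pos i)) (placed_w (ts ! i) (rot i)) (placed_h (ts ! i) (rot i))"

lemma is_layout_alt: "is_layout ts W H pos rot \<longleftrightarrow> W > 0 \<and> H > 0 \<and>
  (\<Union>i<length ts. CR ts pos rot i) = closed_rect 0 0 W H \<and>
  (\<forall>i<length ts. \<forall>j<length ts. i \<noteq> j \<longrightarrow> OR ts pos rot i \<inter> OR ts pos rot j = {})"
  unfolding is_layout_def CR_def OR_def by simp

definition spl :: "tile list \<Rightarrow> tile list" where
  "spl ts = (fst (hd ts) / 2, snd (hd ts)) # (fst (hd ts) / 2, snd (hd ts)) # tl ts"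

definition spos :: "tile list \<Rightarrow> (nat \<Rightarrow> real \<times> real) \<Rightarrow> (nat \<Rightarrow> bool) \<Rightarrow> nat \<Rightarrow> real \<times> real" where
  "spos ts pos rot i = (if i = 1 then
      (if rot 0 then (fst (pos 0), snd (pos 0) + fst (hd ts) / 2) else (fst (pos 0) + fst (hd ts) / 2, snd (pos 0)))
     else pos (i - 1))"

definition srot :: "(nat \<Rightarrow> bool) \<Rightarrow> nat \<Rightarrow> bool" where
  "srot rot i = rot (i - 1)"

lemma spl_len: "ts \<noteq> [] \<Longrightarrow> length (spl ts) = length ts + 1"
  unfolding spl_def by simp

lemma spl_ge2: "ts \<noteq> [] \<Longrightarrow> 2 \<le> i \<Longrightarrow> CR (spl ts) (spos ts pos rot) (srot rot) i = CR ts pos rot (i - 1)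
   \<and> OR (spl ts) (spos ts pos rot) (srot rot) i = OR ts pos rot (i - 1)"
proof -
  assume ne: "ts \<noteq> []" and i: "2 \<le> i"
  then obtain k where k: "i = Suc (Suc k)" by (metis add_2_eq_Suc le_Suc_ex)
  obtain t r where ts: "ts = t # r" using ne by (cases ts) auto
  have "spl ts ! i = ts ! (i - 1)" unfolding spl_def ts k by simp
  moreover have "spos ts pos rot i = pos (i - 1)" unfolding spos_def k by simp
  moreover have "srot rot i = rot (i - 1)" unfolding srot_def by simp
  ultimately show ?thesis unfolding CR_def OR_def by simp
qed

lemma spl_01: assumes ne: "ts \<noteq> []"
  shows "CR (spl ts) (spos ts pos rot) (srot rot) 0 \<union> CR (spl ts) (spos ts pos rot) (srot rot) 1 = CR ts pos rot 0"
    "OR (spl ts) (spos ts pos rot) (srot rot) 0 \<subseteq> OR ts pos rot 0"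
    "OR (spl ts) (spos ts pos rot) (srot rot) 1 \<subseteq> OR ts pos rot 0"
    "OR (spl ts) (spos ts pos rot) (srot rot) 0 \<inter> OR (spl ts) (spos ts pos rot) (srot rot) 1 = {}"
proof -
  obtain t r where ts: "ts = t # r" using ne by (cases ts) auto
  obtain w h where t: "t = (w, h)" by (cases t)
  obtain x y where p: "pos 0 = (x, y)" by (cases "pos 0")
  show "CR (spl ts) (spos ts pos rot) (srot rot) 0 \<union> CR (spl ts) (spos ts pos rot) (srot rot) 1 = CR ts pos rot 0"
    unfolding CR_def spl_def spos_def srot_def ts t p closed_rect_def placed_w_def placed_h_def
    by (cases "rot 0") (auto simp: p)
  show "OR (spl ts) (spos ts pos rot) (srot rot) 0 \<subseteq> OR ts pos rot 0"
    unfolding OR_def spl_def spos_def srot_def ts t p open_rect_def placed_w_def placed_h_def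
    by (cases "rot 0") (auto simp: p)
  show "OR (spl ts) (spos ts pos rot) (srot rot) 1 \<subseteq> OR ts pos rot 0"
    unfolding OR_def spl_def spos_def srot_def ts t p open_rect_def placed_w_def placed_h_def
    by (cases "rot 0") (auto simp: p)
  show "OR (spl ts) (spos ts pos rot) (srot rot) 0 \<inter> OR (spl ts) (spos ts pos rot) (srot rot) 1 = {}"
    unfolding OR_def spl_def spos_def srot_def ts t p open_rect_def placed_w_def placed_h_def
    by (cases "rot 0") (auto simp: p)
qed

lemma spl_layout:
  assumes ne: "ts \<noteq> []" and L: "is_layout ts W H pos rot"
  shows "is_layout (spl ts) W H (spos ts pos rot) (srot rot)"
proof -
  let ?n = "length ts"
  let ?R = "CR ts pos rot" and ?O = "OR ts pos rot"
  let ?R' = "CR (spl ts) (spos ts pos rot) (srot rot)" and ?O' = "OR (spl ts) (spos ts pos rot) (srot rot)"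
  have n0: "0 < ?n" using ne by simp
  have U: "(\<Union>i<?n. ?R i) = closed_rect 0 0 W H" and WH: "W > 0" "H > 0"
    and D: "\<And>i j. i < ?n \<Longrightarrow> j < ?n \<Longrightarrow> i \<noteq> j \<Longrightarrow> ?O i \<inter> ?O j = {}"
    using L unfolding is_layout_alt by auto
  note s01 = spl_01[OF ne, of pos rot]
  note s2 = spl_ge2[OF ne, of _ pos rot]
  have len: "length (spl ts) = ?n + 1" using spl_len[OF ne] .
  have U': "(\<Union>i<length (spl ts). ?R' i) = (\<Union>i<?n. ?R i)"
  proof
    show "(\<Union>i<length (spl ts). ?R' i) \<subseteq> (\<Union>i<?n. ?R i)"
    proof
      fix x assume "x \<in> (\<Union>i<length (spl ts). ?R' i)"
      then obtain i where i: "i < ?n + 1" "x \<in> ?R' i" using len by auto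
      show "x \<in> (\<Union>i<?n. ?R i)"
      proof (cases "i < 2")
        case True
        then have "x \<in> ?R 0" using i s01(1) by (cases i) auto
        then show ?thesis using n0 by blast
      next
        case False
        then have "x \<in> ?R (i - 1)" using i s2[of i] by auto
        moreover have "i - 1 < ?n" using i(1) n0 by linarith
        ultimately show ?thesis by blast
      qed
    qed
  next
    show "(\<Union>i<?n. ?R i) \<subseteq> (\<Union>i<length (spl ts). ?R' i)"
    proof
      fix x assume "x \<in> (\<Union>i<?n. ?R i)"
      then obtain i where i: "i < ?n" "x \<in> ?R i" by auto
      show "x \<in> (\<Union>i<length (spl ts). ?R' i)"
      proof (cases "i = 0")
        case True
        then have "x \<in> ?R' 0 \<or> x \<in> ?R' 1" using i s01(1) by blast
        then show ?thesis using len n0 by auto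
      next
        case False
        then have "x \<in> ?R' (i + 1)" using i s2[of "i + 1"] by auto
        moreover have "i + 1 < length (spl ts)" using i len by auto
        ultimately show ?thesis by blast
      qed
    qed
  qed
  have D': "?O' i \<inter> ?O' j = {}" if ij: "i < length (spl ts)" "j < length (spl ts)" "i \<noteq> j" for i j
  proof -
    have sub: "?O' k \<subseteq> ?O (k - 1)" if "k < length (spl ts)" for k
    proof (cases "k < 2")
      case True then show ?thesis using s01(2,3) by (cases k) auto
    next
      case False then show ?thesis using s2[of k] by auto
    qed
    show ?thesis
    proof (cases "i < 2 \<and> j < 2")
      case True
      then have "{i, j} = {0, 1}" using ij by auto
      then show ?thesis using s01(4) by (auto simp: doubleton_eq_iff)
    next
      case False
      then have "i - 1 \<noteq> j - 1" using ij by auto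
      moreover have "i - 1 < ?n" "j - 1 < ?n" using ij len by auto
      ultimately have "?O (i - 1) \<inter> ?O (j - 1) = {}" using D by blast
      then show ?thesis using sub[OF ij(1)] sub[OF ij(2)] by blast
    qed
  qed
  show ?thesis unfolding is_layout_alt using WH U U' D' by auto
qed

lemma spl_valid: "ts \<noteq> [] \<Longrightarrow> valid_tiles ts \<Longrightarrow> valid_tiles (spl ts)"
  unfolding valid_tiles_def spl_def by (cases ts) auto

lemma spl_perims: "ts \<noteq> [] \<Longrightarrow> layout_perimeters ts \<subseteq> layout_perimeters (spl ts)"
  unfolding layout_perimeters_def using spl_layout by blast

theorem mainTheorem5:
  fixes n :: nat
  assumes "n \<ge> 1"
  shows "L (n + 1) \<ge> L n"
  unfolding L_def
proof (rule SUP_least)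
  fix ts assume ts: "ts \<in> {ts. length ts = n \<and> valid_tiles ts}"
  then have ne: "ts \<noteq> []" and v: "valid_tiles ts" using assms by auto
  have mem: "spl ts \<in> {ts. length ts = n + 1 \<and> valid_tiles ts}"
    using ts spl_len[OF ne] spl_valid[OF ne v] by auto
  have "card (layout_perimeters ts) \<le> card (layout_perimeters (spl ts))"
    using card_mono[OF perims_finite[OF spl_valid[OF ne v]] spl_perims[OF ne]] .
  then have "enat (card (layout_perimeters ts)) \<le> enat (card (layout_perimeters (spl ts)))" by simp
  also have "\<dots> \<le> (SUP ts \<in> {ts. length ts = n + 1 \<and> valid_tiles ts}. enat (card (layout_perimeters ts)))"
    using mem by (rule SUP_upper)
  finally show "enat (card (layout_perimeters ts)) \<le> (SUP ts \<in> {ts. length ts = n + 1 \<and> valid_tiles ts}. enat (card (layout_perimeters ts)))" .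
qed

end
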